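(* There exists a directed set $\mathcal A$, which is not a cardinal number, with $\operatorname{card}(\mathcal A)=\operatorname{cov}(\mathcal N)$, such that $\mathcal{AN}_{\mathcal A}$ is strongly $2^{\mathfrak c}$-algebrable in $\left(\mathbb R^{\mathbb R}\right)^{\mathcal A}$.
   Context: A directed set is a nonempty set $\mathcal A$ with a reflexive transitive relation $\le$ in which any two elements have an upper bound; $x_A\to x$ if for each neighbourhood $U$ of $x$ there is $A_0$ with $x_A\in U$ for $A\ge A_0$. $\left(\mathbb R^{\mathbb R}\right)^{\mathcal A}$ is the commutative real algebra of nets of functions $\mathbb R\to\mathbb R$ with indexwise operations. $\mathcal N$ denotes the Lebesgue null sets; $\operatorname{cov}(\mathcal N)$ is the least cardinality of a family of null sets covering $[0,1]$ (equivalently $\mathbb R$); $\mathfrak c=2^{\aleph_0}$. $\mathcal{AN}_{\mathcal A}$: nets of Lebesgue measurable functions $f_A:\mathbb R\to\mathbb R$ that converge pointwise a.e. to a non-Lebesgue-measurable function. A subset $S$ of a commutative algebra is strongly $\kappa$-algebrable if there is a set $X$ of $\kappa$ algebraically independent elements such that every nonzero element of the (non-unital) algebra generated by $X$ belongs to $S$. *)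

theory Defs
  imports "HOL-Analysis.Analysis"
begin

definition directed_set :: "'i set \<Rightarrow> ('i \<Rightarrow> 'i \<Rightarrow> bool) \<Rightarrow> bool" where
  "directed_set D le \<longleftrightarrow> D \<noteq> {} \<and> (\<forall>a\<in>D. le a a)
     \<and> (\<forall>a\<in>D. \<forall>b\<in>D. \<forall>c\<in>D. le a b \<longrightarrow> le b c \<longrightarrow> le a c)
     \<and> (\<forall>a\<in>D. \<forall>b\<in>D. \<exists>c\<in>D. le a c \<and> le b c)"

definition dir_rel :: "'i set \<Rightarrow> ('i \<Rightarrow> 'i \<Rightarrow> bool) \<Rightarrow> 'i rel" where
  "dir_rel D le = {(a, b). a \<in> D \<and> b \<in> D \<and> le a b}"

definition is_cardinal_number :: "'i set \<Rightarrow> ('i \<Rightarrow> 'i \<Rightarrow> bool) \<Rightarrow> bool" where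
  "is_cardinal_number D le \<longleftrightarrow> card_order_on D (dir_rel D le)"

definition card_eq_covN :: "'i set \<Rightarrow> bool" where
  "card_eq_covN D \<longleftrightarrow>
     (\<exists>F :: real set set. F \<subseteq> null_sets lebesgue \<and> \<Union>F = UNIV
        \<and> (card_of D, card_of F) \<in> ordIso)
   \<and> (\<forall>F :: real set set. F \<subseteq> null_sets lebesgue \<and> \<Union>F = UNIV
        \<longrightarrow> (card_of D, card_of F) \<in> ordLeq)"

definition net_tendsto :: "'i set \<Rightarrow> ('i \<Rightarrow> 'i \<Rightarrow> bool) \<Rightarrow> ('i \<Rightarrow> real) \<Rightarrow> real \<Rightarrow> bool" where
  "net_tendsto D le f x \<longleftrightarrow>
     (\<forall>U. open U \<and> x \<in> U \<longrightarrow> (\<exists>A0\<in>D. \<forall>A\<in>D. le A0 A \<longrightarrow> f A \<in> U))"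

text \<open>The algebra (R^R)^D: nets indexed by D (values outside D are fixed to 0).\<close>
definition nets :: "'i set \<Rightarrow> ('i \<Rightarrow> real \<Rightarrow> real) set" where
  "nets D = {f. \<forall>A. A \<notin> D \<longrightarrow> f A = (\<lambda>_. 0)}"

definition AN :: "'i set \<Rightarrow> ('i \<Rightarrow> 'i \<Rightarrow> bool) \<Rightarrow> ('i \<Rightarrow> real \<Rightarrow> real) set" where
  "AN D le = {f \<in> nets D. (\<forall>A\<in>D. f A \<in> borel_measurable lebesgue)
     \<and> (\<exists>g. g \<notin> borel_measurable lebesgue
            \<and> (AE x in lebesgue. net_tendsto D le (\<lambda>A. f A x) (g x)))}"

text \<open>A real polynomial in the variables 0..n-1 without constant term, given by a finite
  nonempty set M of exponent vectors (monomials, each nonconstant, supported in {..<n})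
  with nonzero coefficients c; hence a nonzero polynomial.\<close>
definition nonzero_poly_nc :: "nat \<Rightarrow> (nat \<Rightarrow> nat) set \<Rightarrow> ((nat \<Rightarrow> nat) \<Rightarrow> real) \<Rightarrow> bool" where
  "nonzero_poly_nc n M c \<longleftrightarrow> finite M \<and> M \<noteq> {}
     \<and> (\<forall>m\<in>M. (\<forall>i\<ge>n. m i = 0) \<and> m \<noteq> (\<lambda>_. 0) \<and> c m \<noteq> 0)"

definition poly_eval :: "nat \<Rightarrow> (nat \<Rightarrow> nat) set \<Rightarrow> ((nat \<Rightarrow> nat) \<Rightarrow> real) \<Rightarrow> (nat \<Rightarrow> real) \<Rightarrow> real" where
  "poly_eval n M c v = (\<Sum>m\<in>M. c m * (\<Prod>i<n. v i ^ m i))"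

definition net_poly_eval :: "nat \<Rightarrow> (nat \<Rightarrow> nat) set \<Rightarrow> ((nat \<Rightarrow> nat) \<Rightarrow> real)
     \<Rightarrow> (nat \<Rightarrow> 'i \<Rightarrow> real \<Rightarrow> real) \<Rightarrow> 'i \<Rightarrow> real \<Rightarrow> real" where
  "net_poly_eval n M c x = (\<lambda>A t. poly_eval n M c (\<lambda>i. x i A t))"

text \<open>S is strongly kappa-algebrable in (R^R)^D, where kappa = |K|: there is a set X of
  kappa elements such that every nonzero polynomial without constant term evaluated at
  distinct elements of X is nonzero (algebraic independence) and lies in S.\<close>
definition strongly_algebrable_nets :: "'i set \<Rightarrow> ('i \<Rightarrow> real \<Rightarrow> real) set \<Rightarrow> 'k set \<Rightarrow> bool" where
  "strongly_algebrable_nets D S K \<longleftrightarrow>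
     (\<exists>X. X \<subseteq> nets D \<and> (card_of X, card_of K) \<in> ordIso
        \<and> (\<forall>n M c x. nonzero_poly_nc n M c \<and> inj_on x {..<n} \<and> x ` {..<n} \<subseteq> X \<longrightarrow>
             net_poly_eval n M c x \<noteq> (\<lambda>_ _. 0) \<and> net_poly_eval n M c x \<in> S))"

end

theory Submission
  imports Defs "HOL-Computational_Algebra.Polynomial" "HOL-Library.Equipollence" "HOL-Library.Countable"
begin
unbundle cardinal_syntax

lemma digits_inj:
  fixes B :: nat
  assumes "B > 0" "\<forall>i<n. m i < B" "\<forall>i<n. m' i < B"
    "(\<Sum>i<n. m i * B^i) = (\<Sum>i<n. m' i * B^i)"
  shows "\<forall>i<n. m i = m' i"
  using assms
proof (induction n arbitrary: m m')
  case 0 then show ?case by simp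
next
  case (Suc n)
  have e: "(\<Sum>i<Suc n. f i * B^i) = f 0 + B * (\<Sum>i<n. f (Suc i) * B^i)" for f :: "nat \<Rightarrow> nat"
    unfolding sum.lessThan_Suc_shift by (simp add: sum_distrib_left mult.assoc mult.left_commute del: sum.lessThan_Suc)
  have eq: "m 0 + B * (\<Sum>i<n. m (Suc i) * B^i) = m' 0 + B * (\<Sum>i<n. m' (Suc i) * B^i)"
    using Suc.prems(4) e[of m] e[of m'] by simp
  have m0: "m 0 < B" "m' 0 < B" using Suc.prems by auto
  have h0: "m 0 = m' 0"
    using arg_cong[OF eq, of "\<lambda>x. x mod B"] m0 by simp
  have hr: "(\<Sum>i<n. m (Suc i) * B^i) = (\<Sum>i<n. m' (Suc i) * B^i)"
    using eq h0 \<open>B>0\<close> by simp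
  have "\<forall>i<n. m (Suc i) = m' (Suc i)"
    by (rule Suc.IH) (use Suc.prems hr in auto)
  then show ?case using h0 by (auto simp: less_Suc_eq_0_disj)
qed

lemma poly_nonvanish:
  assumes "nonzero_poly_nc n M c"
  shows "\<exists>k::nat\<Rightarrow>nat. poly_eval n M c (\<lambda>i. real (k i)) \<noteq> 0"
proof -
  have fin: "finite M" and ne: "M \<noteq> {}" and supp: "\<And>m i. m \<in> M \<Longrightarrow> i \<ge> n \<Longrightarrow> m i = 0"
    and cnz: "\<And>m. m \<in> M \<Longrightarrow> c m \<noteq> 0"
    using assms unfolding nonzero_poly_nc_def by auto
  define B where "B = Suc (Max ((\<lambda>(m,i). m i) ` (M \<times> {..<n})))"
  have Bpos: "B > 0" by (simp add: B_def)
  have lt: "m i < B" if "m \<in> M" "i < n" for m i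
  proof -
    have "m i \<in> (\<lambda>(m,i). m i) ` (M \<times> {..<n})" using that by force
    then have "m i \<le> Max ((\<lambda>(m,i). m i) ` (M \<times> {..<n}))" using fin by (intro Max_ge) auto
    then show ?thesis by (simp add: B_def)
  qed
  define \<kappa> where "\<kappa> m = (\<Sum>i<n. m i * B^i)" for m :: "nat \<Rightarrow> nat"
  have kinj: "m = m'" if "m \<in> M" "m' \<in> M" "\<kappa> m = \<kappa> m'" for m m'
  proof
    fix i show "m i = m' i"
    proof (cases "i < n")
      case True
      have "\<forall>i<n. m i = m' i"
        by (rule digits_inj[OF Bpos]) (use that lt in \<open>auto simp: \<kappa>_def\<close>)
      then show ?thesis using True by auto
    next
      case False then show ?thesis using supp[of m i] supp[of m' i] that by simp
    qed
  qed
  define p :: "real poly" where "p = (\<Sum>m\<in>M. monom (c m) (\<kappa> m))"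
  obtain m0 where m0: "m0 \<in> M" using ne by auto
  have "coeff p (\<kappa> m0) = (\<Sum>m\<in>M. if \<kappa> m = \<kappa> m0 then c m else 0)"
    by (simp add: p_def coeff_sum coeff_monom)
  also have "\<dots> = (\<Sum>m\<in>{m0}. c m)"
    by (rule sum.mono_neutral_cong_right) (use fin m0 kinj in auto)
  finally have "coeff p (\<kappa> m0) \<noteq> 0" using cnz[OF m0] by simp
  then have pnz: "p \<noteq> 0" by auto
  have "finite {x. poly p x = 0}" by (rule poly_roots_finite[OF pnz])
  moreover have "infinite (range (real :: nat \<Rightarrow> real))"
    using range_inj_infinite[of real] by (simp add: inj_on_def)
  ultimately obtain x :: nat where x: "poly p (real x) \<noteq> 0"
    by (metis (mono_tags, lifting) finite_subset image_subset_iff mem_Collect_eq)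
  have pe: "poly_eval n M c (\<lambda>i. real (x ^ (B^i))) = poly p (real x)"
  proof -
    have "(\<Prod>i<n. real (x ^ B ^ i) ^ m i) = real x ^ \<kappa> m" for m
      by (simp add: \<kappa>_def power_sum power_mult[symmetric] mult.commute)
    then show ?thesis by (simp add: poly_eval_def p_def poly_sum poly_monom)
  qed
  show ?thesis using pe x by (intro exI[of _ "\<lambda>i. x ^ (B^i)"]) simp
qed


type_synonym ytype = "real list \<times> (bool list \<times> nat) list"

definition bmask :: "real set \<Rightarrow> real list \<Rightarrow> bool list" where
  "bmask S xs = map (\<lambda>z. z \<in> S) xs"

definition psi :: "real set \<Rightarrow> ytype \<Rightarrow> nat" where
  "psi S y = (case map_of (snd y) (bmask S (fst y)) of Some k \<Rightarrow> k | None \<Rightarrow> 0)"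

lemma psi_star: "psi S ([], []) = 0"
  by (simp add: psi_def)

lemma psi_indep:
  fixes S :: "nat \<Rightarrow> real set" and n :: nat and k :: "nat \<Rightarrow> nat"
  assumes "inj_on S {..<n}"
  shows "\<exists>y. \<forall>i<n. psi (S i) y = k i"
proof -
  define sep where "sep = (\<lambda>(i,j). SOME z. (z \<in> S i) \<noteq> (z \<in> S j))"
  define xs where "xs = map sep (List.product [0..<n] [0..<n])"
  have sepin: "sep (i,j) \<in> set xs" if "i < n" "j < n" for i j
    using that by (auto simp: xs_def)
  have sepP: "(sep (i,j) \<in> S i) \<noteq> (sep (i,j) \<in> S j)" if "i < n" "j < n" "i \<noteq> j" for i j
  proof -
    have "S i \<noteq> S j" using assms that by (auto simp: inj_on_def)
    then have "\<exists>z. (z \<in> S i) \<noteq> (z \<in> S j)" by blast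
    then show ?thesis unfolding sep_def prod.case by (rule someI_ex)
  qed
  have md: "bmask (S i) xs \<noteq> bmask (S j) xs" if "i < n" "j < n" "i \<noteq> j" for i j
  proof
    assume "bmask (S i) xs = bmask (S j) xs"
    then have "\<forall>z\<in>set xs. (z \<in> S i) = (z \<in> S j)" by (simp add: bmask_def map_eq_conv)
    then show False using sepin[OF that(1,2)] sepP[OF that] by blast
  qed
  define al where "al = map (\<lambda>i. (bmask (S i) xs, k i)) [0..<n]"
  have dist: "distinct (map fst al)"
    unfolding al_def using md by (simp add: distinct_map inj_on_def) (metis atLeastLessThan_iff)
  have "psi (S i) (xs, al) = k i" if "i < n" for i
  proof -
    have "(bmask (S i) xs, k i) \<in> set al" using that by (auto simp: al_def)
    then have "map_of al (bmask (S i) xs) = Some (k i)"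
      using map_of_eq_Some_iff[OF dist] by blast
    then show ?thesis by (simp add: psi_def)
  qed
  then show ?thesis by blast
qed


lemma transversal:
  fixes I :: "'a set" and A :: "'a \<Rightarrow> 'b set"
  assumes le: "\<forall>i\<in>I. |I| \<le>o |A i|"
  shows "\<exists>p. inj_on p I \<and> (\<forall>i\<in>I. p i \<in> A i)"
proof -
  let ?r = "|I|"
  have co: "Card_order ?r" by (rule card_of_Card_order)
  have wo: "wo_rel ?r" using card_of_Well_order unfolding wo_rel_def .
  define H where "H = (\<lambda>(p::'a \<Rightarrow> 'b) i. SOME x. x \<in> A i \<and> x \<notin> p ` underS ?r i)"
  define p where "p = wo_rel.worec ?r H"
  have adm: "wo_rel.adm_wo ?r H"
    unfolding wo_rel.adm_wo_def[OF wo] H_def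
    by (auto intro!: arg_cong[where f=Eps] simp: fun_eq_iff image_def)
  have pfix: "p = H p" unfolding p_def using wo_rel.worec_fixpoint[OF wo adm] .
  have key: "p i \<in> A i \<and> p i \<notin> p ` underS ?r i" if i: "i \<in> I" for i
  proof -
    have "|p ` underS ?r i| \<le>o |underS ?r i|" by (rule card_of_image)
    moreover have "|underS ?r i| <o ?r" using card_of_underS[OF co] i by (simp add: Field_card_of)
    ultimately have "|p ` underS ?r i| <o |A i|"
      using le i ordLeq_ordLess_trans ordLess_ordLeq_trans by blast
    then have "\<not> A i \<subseteq> p ` underS ?r i"
      using card_of_mono1 not_ordLess_ordLeq by blast
    then have "\<exists>x. x \<in> A i \<and> x \<notin> p ` underS ?r i" by blast
    then have "H p i \<in> A i \<and> H p i \<notin> p ` underS ?r i"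
      unfolding H_def by (rule someI_ex)
    then show ?thesis using pfix by metis
  qed
  have "inj_on p I"
  proof (rule inj_onI)
    fix i j assume ij: "i \<in> I" "j \<in> I" "p i = p j"
    show "i = j"
    proof (rule ccontr)
      assume ne: "i \<noteq> j"
      have "(i, j) \<in> ?r \<or> (j, i) \<in> ?r"
        using wo_rel.TOTALS[OF wo] ij by (simp add: Field_card_of)
      then show False
      proof
        assume "(i, j) \<in> ?r"
        then have "i \<in> underS ?r j" using ne by (simp add: underS_def)
        then show False using key[OF ij(2)] ij(3) by (metis imageI)
      next
        assume "(j, i) \<in> ?r"
        then have "j \<in> underS ?r i" using ne by (simp add: underS_def)
        then show False using key[OF ij(1)] ij(3) by (metis imageI)
      qed
    qed
  qed
  then show ?thesis using key by blast
qed


lemma meas_Icc: "measure lebesgue {x..y::real} = (if x \<le> y then y - x else 0)"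
  by (simp add: measure_def)

lemma compact_pos_card:
  fixes K :: "real set"
  assumes K: "compact K" and pos: "measure lebesgue K > 0"
  shows "|UNIV :: real set| \<le>o |K|"
proof -
  define F where "F x = measure lebesgue (K \<inter> {..x})" for x
  have cK: "compact (K \<inter> {..x})" for x using K by (simp add: compact_Int_closed)
  have fm: "K \<inter> {..x} \<in> lmeasurable" for x using cK lmeasurable_compact by blast
  have Fdiff: "F y - F x \<le> y - x" "F x \<le> F y" if "x \<le> y" for x y
  proof -
    have sub: "K \<inter> {..x} \<subseteq> K \<inter> {..y}" using that by auto
    have "F y - F x = measure lebesgue (K \<inter> {..y} - K \<inter> {..x})"
      unfolding F_def using fm[of y] fm[of x] sub
      by (subst measure_Diff) (auto simp: fmeasurable_def)
    also have "\<dots> \<le> measure lebesgue {x..y}"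
      by (rule measure_mono_fmeasurable) (use fm[of y] fm[of x] in auto)
    also have "\<dots> = y - x" using that by (simp add: meas_Icc)
    finally show "F y - F x \<le> y - x" .
    show "F x \<le> F y" unfolding F_def by (rule measure_mono_fmeasurable[OF sub]) (use fm in auto)
  qed
  have Fabs: "\<bar>F y - F x\<bar> \<le> \<bar>y - x\<bar>" for x y
    using Fdiff[of x y] Fdiff[of y x] by (cases "x \<le> y") auto
  have cont: "continuous_on UNIV F"
    unfolding continuous_on_iff
    by (metis Fabs dist_real_def le_less_trans)
  have Kne: "K \<noteq> {}" using pos by auto
  define a where "a = Inf K"
  define b where "b = Sup K"
  have aK: "a \<in> K" and bK: "b \<in> K" unfolding a_def b_def
    using closed_contains_Inf[OF Kne] closed_contains_Sup[OF Kne] K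
    by (auto simp: compact_imp_closed compact_imp_bounded bounded_imp_bdd_below bounded_imp_bdd_above)
  have ak: "a \<le> k" "k \<le> b" if "k \<in> K" for k
    unfolding a_def b_def using that K
    by (auto intro!: cInf_lower cSup_upper simp: compact_imp_bounded bounded_imp_bdd_below bounded_imp_bdd_above)
  have Fa: "F (a - 1) = 0" unfolding F_def using ak by (subgoal_tac "K \<inter> {..a-1} = {}") force+
  have Fb: "F b = measure lebesgue K" unfolding F_def using ak by (subgoal_tac "K \<inter> {..b} = K") auto
  have img: "{0<..measure lebesgue K} \<subseteq> F ` K"
  proof
    fix v assume v: "v \<in> {0<..measure lebesgue K}"
    obtain x where x: "a - 1 \<le> x" "x \<le> b" "F x = v"
      using IVT'[of F "a-1" v b] Fa Fb v aK ak[OF aK] continuous_on_subset[OF cont]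
      by force
    have ne: "K \<inter> {..x} \<noteq> {}" using x v unfolding F_def by auto
    define s where "s = Sup (K \<inter> {..x})"
    have sK: "s \<in> K \<inter> {..x}" unfolding s_def
      using closed_contains_Sup[OF ne] cK[of x]
      by (auto simp: compact_imp_closed compact_imp_bounded bounded_imp_bdd_above)
    have "K \<inter> {..x} = K \<inter> {..s}"
    proof -
      have "k \<le> s" if "k \<in> K \<inter> {..x}" for k unfolding s_def using that cK[of x]
        by (auto intro!: cSup_upper simp: compact_imp_bounded bounded_imp_bdd_above)
      then show ?thesis using sK by auto
    qed
    then have "F s = v" using x by (simp add: F_def)
    then show "v \<in> F ` K" using sK by auto
  qed
  have "{0<..measure lebesgue K} \<approx> (UNIV :: real set)"
    by (rule eqpoll_real_subset[OF pos]) auto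
  then have "|UNIV :: real set| \<le>o |{0<..measure lebesgue K}|"
    by (metis eqpoll_iff_card_of_ordIso ordIso_iff_ordLeq ordIso_symmetric)
  also have "|{0<..measure lebesgue K}| \<le>o |F ` K|" using img by (rule card_of_mono1)
  also have "|F ` K| \<le>o |K|" by (rule card_of_image)
  finally show ?thesis .
qed


lemma real_lists_card: "|UNIV :: real list set| \<le>o |UNIV :: real set|"
proof -
  have inf: "\<not> finite (UNIV :: real set)" by (rule infinite_UNIV_char_0)
  have len: "|{l :: real list. length l = n}| \<le>o |UNIV :: real set|" for n
  proof (induction n)
    case 0
    have "{l :: real list. length l = 0} = {[]}" by auto
    then show ?case using inf by (simp add: card_of_singl_ordLeq)
  next
    case (Suc n)
    have ne: "{l :: real list. length l = n} \<noteq> {}" by (metis (mono_tags) empty_iff length_replicate mem_Collect_eq)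
    have sub: "{l :: real list. length l = Suc n} \<subseteq> (\<lambda>p. fst p # snd p) ` ((UNIV::real set) \<times> {l. length l = n})"
    proof
      fix l :: "real list" assume "l \<in> {l. length l = Suc n}"
      then obtain x l' where "l = x # l'" "length l' = n" by (auto simp: length_Suc_conv)
      then show "l \<in> (\<lambda>p. fst p # snd p) ` ((UNIV::real set) \<times> {l. length l = n})"
        by (intro image_eqI[of _ _ "(x, l')"]) auto
    qed
    have 1: "|{l :: real list. length l = Suc n}| \<le>o |(UNIV::real set) \<times> {l :: real list. length l = n}|"
      using ordLeq_transitive[OF card_of_mono1[OF sub] card_of_image] .
    have 2: "|(UNIV::real set) \<times> {l :: real list. length l = n}| =o |UNIV :: real set|"
      using card_of_Times_infinite[OF inf ne Suc.IH] by (rule conjunct1)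
    show ?case using ordLeq_ordIso_trans[OF 1 2] .
  qed
  have "(UNIV :: real list set) = (\<Union>n \<in> (UNIV::nat set). {l. length l = n})" by auto
  moreover have "|\<Union>n \<in> (UNIV::nat set). {l :: real list. length l = n}| \<le>o |UNIV :: real set|"
  proof (rule card_of_UNION_ordLeq_infinite[OF inf])
    show "|UNIV :: nat set| \<le>o |UNIV :: real set|"
      using inf infinite_iff_card_of_nat by blast
  qed (use len in auto)
  ultimately show ?thesis by simp
qed

definition closed_code :: "real set \<Rightarrow> nat set" where
  "closed_code K = {n. \<exists>a b::rat. n = to_nat (a,b) \<and> {real_of_rat a..real_of_rat b} \<inter> K = {}}"

lemma closed_code_inj: "inj_on closed_code {K. closed K}"
proof -
  have sub: "K' \<subseteq> K" if "closed K" "closed K'" "closed_code K = closed_code K'" for K K'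
  proof
    fix x assume "x \<in> K'"
    show "x \<in> K"
    proof (rule ccontr)
      assume "x \<notin> K"
      then obtain e where e: "e > 0" "ball x e \<subseteq> - K"
        using \<open>closed K\<close> open_contains_ball[of "- K"] by (auto simp: closed_def)
      obtain a :: rat where a: "x - e < real_of_rat a" "real_of_rat a < x"
        using of_rat_dense[of "x - e" x] e by auto
      obtain b :: rat where b: "x < real_of_rat b" "real_of_rat b < x + e"
        using of_rat_dense[of x "x + e"] e by auto
      have "{real_of_rat a..real_of_rat b} \<subseteq> ball x e" using a b by (auto simp: dist_real_def)
      then have "to_nat (a,b) \<in> closed_code K" using e unfolding closed_code_def by blast
      then have "to_nat (a,b) \<in> closed_code K'" using that by simp
      then obtain a' b' :: rat where "to_nat (a,b) = to_nat (a',b')" "{real_of_rat a'..real_of_rat b'} \<inter> K' = {}"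
        unfolding closed_code_def by blast
      then have "{real_of_rat a..real_of_rat b} \<inter> K' = {}" by simp
      moreover have "x \<in> {real_of_rat a..real_of_rat b}" using a b by auto
      ultimately show False using \<open>x \<in> K'\<close> by blast
    qed
  qed
  show ?thesis unfolding inj_on_def using sub by (metis mem_Collect_eq subset_antisym)
qed

lemma closed_times_card:
  fixes C :: "'c::countable set"
  shows "|{K :: real set. closed K} \<times> (UNIV :: (real list \<times> 'c) set)| \<le>o |UNIV :: real set|"
proof -
  obtain g :: "nat set \<Rightarrow> real" where g: "inj g"
    using nat_sets_eqpoll_reals unfolding eqpoll_def bij_betw_def by blast
  define h where "h = (\<lambda>(K, (xs, c::'c)). g (closed_code K) # real (to_nat c) # xs)"
  have "inj_on h ({K :: real set. closed K} \<times> UNIV)"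
  proof (rule inj_onI)
    fix u v assume u: "u \<in> {K :: real set. closed K} \<times> (UNIV :: (real list \<times> 'c) set)"
      and v: "v \<in> {K :: real set. closed K} \<times> (UNIV :: (real list \<times> 'c) set)" and huv: "h u = h v"
    obtain K xs c where [simp]: "u = (K, xs, c)" by (metis prod.exhaust)
    obtain K' xs' c' where [simp]: "v = (K', xs', c')" by (metis prod.exhaust)
    have "g (closed_code K) = g (closed_code K')" "real (to_nat c) = real (to_nat c')" "xs = xs'"
      using huv by (auto simp: h_def)
    then have "closed_code K = closed_code K'" "c = c'" using g by (auto dest: injD)
    then have "K = K'" using closed_code_inj u v by (auto simp: inj_on_def)
    then show "u = v" using \<open>c = c'\<close> \<open>xs = xs'\<close> by simp
  qed
  then have "|{K :: real set. closed K} \<times> (UNIV :: (real list \<times> 'c) set)| \<le>o |UNIV :: real list set|"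
    using card_of_ordLeq by blast
  then show ?thesis using real_lists_card ordLeq_transitive by blast
qed


lemma bernstein:
  "\<exists>\<eta> :: real \<Rightarrow> ytype. \<forall>y K. compact K \<and> measure lebesgue K > 0 \<longrightarrow> (\<exists>t\<in>K. \<eta> t = y)"
proof -
  define KK where "KK = {K :: real set. compact K \<and> measure lebesgue K > 0}"
  define I where "I = KK \<times> (UNIV :: ytype set)"
  have "I \<subseteq> {K :: real set. closed K} \<times> (UNIV :: ytype set)"
    by (auto simp: I_def KK_def compact_imp_closed)
  then have "|I| \<le>o |{K :: real set. closed K} \<times> (UNIV :: ytype set)|" by (rule card_of_mono1)
  then have Ile: "|I| \<le>o |UNIV :: real set|" using closed_times_card ordLeq_transitive by blast
  have "\<forall>i\<in>I. |I| \<le>o |fst i|"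
  proof
    fix i assume "i \<in> I"
    then have "compact (fst i)" "measure lebesgue (fst i) > 0" by (auto simp: I_def KK_def)
    then have "|UNIV :: real set| \<le>o |fst i|" by (rule compact_pos_card)
    then show "|I| \<le>o |fst i|" using Ile ordLeq_transitive by blast
  qed
  then obtain p where p: "inj_on p I" "\<forall>i\<in>I. p i \<in> fst i" using transversal by blast
  define \<eta> where "\<eta> t = (if t \<in> p ` I then snd (the_inv_into I p t) else ([], []))" for t
  have "\<exists>t\<in>K. \<eta> t = y" if "compact K" "measure lebesgue K > 0" for y K
  proof -
    have i: "(K, y) \<in> I" using that by (simp add: I_def KK_def)
    have "the_inv_into I p (p (K, y)) = (K, y)" by (rule the_inv_into_f_f[OF p(1) i])
    then have "\<eta> (p (K, y)) = y" using i by (simp add: \<eta>_def)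
    moreover have "p (K, y) \<in> K" using p(2) i by auto
    ultimately show ?thesis by blast
  qed
  then show ?thesis by blast
qed


lemma fin01: "A \<subseteq> {0..1::real} \<Longrightarrow> emeasure lebesgue A \<noteq> top"
proof -
  assume "A \<subseteq> {0..1}"
  then have "emeasure lebesgue A \<le> emeasure lebesgue {0..1::real}"
    by (intro emeasure_mono) auto
  then have "emeasure lebesgue A \<le> 1" by simp
  then show ?thesis using ennreal_one_less_top by (metis dual_order.strict_trans1 less_irrefl)
qed

lemma pos_contains_compact:
  fixes A :: "real set"
  assumes A: "A \<in> sets lebesgue" "A \<subseteq> {0..1}" "measure lebesgue A > 0"
  shows "\<exists>K. compact K \<and> K \<subseteq> A \<and> measure lebesgue K > 0"
proof -
  obtain T where T: "closed T" "T \<subseteq> A" "A - T \<in> lmeasurable"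
    "emeasure lebesgue (A - T) < ennreal (measure lebesgue A)"
    using sets_lebesgue_inner_closed[OF A(1) A(3)] by blast
  have cT: "compact T" using T(1,2) A(2)
    by (meson bounded_closed_interval bounded_subset compact_eq_bounded_closed order_trans)
  have "measure lebesgue T > 0"
  proof (rule ccontr)
    assume "\<not> measure lebesgue T > 0"
    then have m0: "measure lebesgue T = 0" by (simp add: measure_nonneg order_less_le)
    have "emeasure lebesgue T = 0"
      using fin01[of T] T(2) A(2) m0 emeasure_eq_ennreal_measure[of lebesgue T] by simp
    moreover have "emeasure lebesgue A \<le> emeasure lebesgue T + emeasure lebesgue (A - T)"
    proof -
      have "A = T \<union> (A - T)" using T(2) by auto
      then show ?thesis
        using emeasure_subadditive[of T lebesgue "A - T"] cT T(3)
        by (metis borel_compact fmeasurableD sets_completionI_sets sets_lborel)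
    qed
    ultimately have "emeasure lebesgue A < ennreal (measure lebesgue A)" using T(4) by simp
    then show False using emeasure_eq_ennreal_measure[OF fin01[OF A(2)]] by simp
  qed
  then show ?thesis using cT T(2) by blast
qed

lemma nonmeas:
  fixes \<eta> :: "real \<Rightarrow> 'y" and G :: "real \<Rightarrow> real"
  assumes eta: "\<forall>y K. compact K \<and> measure lebesgue K > 0 \<longrightarrow> (\<exists>t\<in>K. \<eta> t = y)"
    and y0: "\<And>t. \<eta> t = y0 \<Longrightarrow> G t \<noteq> 0" and y1: "\<And>t. \<eta> t = y1 \<Longrightarrow> G t = 0"
  shows "G \<notin> borel_measurable lebesgue"
proof
  assume G: "G \<in> borel_measurable lebesgue"
  have Z: "G -` {0} \<in> sets lebesgue" using borel_measurable_vimage[OF G, of 0] by simp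
  define A1 where "A1 = {0..1} - G -` {0}"
  define A2 where "A2 = {0..1} \<inter> G -` {0}"
  have s: "A1 \<in> sets lebesgue" "A2 \<in> sets lebesgue" using Z by (auto simp: A1_def A2_def)
  have sub: "A1 \<subseteq> {0..1}" "A2 \<subseteq> {0..1}" by (auto simp: A1_def A2_def)
  have "measure lebesgue A1 > 0 \<or> measure lebesgue A2 > 0"
  proof (rule ccontr)
    assume "\<not> ?thesis"
    then have "measure lebesgue A1 = 0" "measure lebesgue A2 = 0"
      by (auto simp: measure_nonneg order_less_le)
    then have "A2 \<in> null_sets lebesgue"
      using emeasure_eq_ennreal_measure[OF fin01[OF sub(2)]] s(2) by (simp add: null_sets_def)
    then have "measure lebesgue (A1 \<union> A2) = 0"
      using measure_Un_null_set[OF s(1)] \<open>measure lebesgue A1 = 0\<close> by simp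
    moreover have "A1 \<union> A2 = {0..1}" by (auto simp: A1_def A2_def)
    ultimately show False by (simp add: measure_def)
  qed
  then show False
  proof
    assume "measure lebesgue A1 > 0"
    then obtain K where K: "compact K" "K \<subseteq> A1" "measure lebesgue K > 0"
      using pos_contains_compact[OF s(1) sub(1)] by blast
    then obtain t where "t \<in> K" "\<eta> t = y1" using eta by blast
    then show False using y1 K(2) by (auto simp: A1_def)
  next
    assume "measure lebesgue A2 > 0"
    then obtain K where K: "compact K" "K \<subseteq> A2" "measure lebesgue K > 0"
      using pos_contains_compact[OF s(2) sub(2)] by blast
    then obtain t where "t \<in> K" "\<eta> t = y0" using eta by blast
    then show False using y0 K(2) by (auto simp: A2_def)
  qed
qed


lemma lists_card:
  fixes A :: "'a set"
  assumes inf: "infinite A"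
  shows "|lists A| \<le>o |A|"
proof -
  have len: "|{l \<in> lists A. length l = n}| \<le>o |A|" for n
  proof (induction n)
    case 0
    have eq: "{l \<in> lists A. length l = 0} = {[]}" by auto
    have "A \<noteq> {}" using inf by auto
    from card_of_singl_ordLeq[OF this] show ?case unfolding eq .
  next
    case (Suc n)
    obtain a where a: "a \<in> A" using inf by (metis ex_in_conv finite.emptyI)
    have ne: "{l \<in> lists A. length l = n} \<noteq> {}"
      using a by (intro ex_in_conv[THEN iffD1] exI[of _ "replicate n a"]) auto
    have sub: "{l \<in> lists A. length l = Suc n} \<subseteq> (\<lambda>p. fst p # snd p) ` (A \<times> {l \<in> lists A. length l = n})"
    proof
      fix l assume "l \<in> {l \<in> lists A. length l = Suc n}"
      then obtain x l' where "l = x # l'" "length l' = n" "x \<in> A" "l' \<in> lists A"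
        by (auto simp: length_Suc_conv) (metis in_listsI)
      then show "l \<in> (\<lambda>p. fst p # snd p) ` (A \<times> {l \<in> lists A. length l = n})"
        by (intro image_eqI[of _ _ "(x, l')"]) auto
    qed
    have 1: "|{l \<in> lists A. length l = Suc n}| \<le>o |A \<times> {l \<in> lists A. length l = n}|"
      using ordLeq_transitive[OF card_of_mono1[OF sub] card_of_image] .
    have 2: "|A \<times> {l \<in> lists A. length l = n}| =o |A|"
      using card_of_Times_infinite[OF inf ne Suc.IH] by (rule conjunct1)
    show ?case using ordLeq_ordIso_trans[OF 1 2] .
  qed
  have "lists A = (\<Union>n \<in> (UNIV::nat set). {l \<in> lists A. length l = n})" by auto
  moreover have "|\<Union>n \<in> (UNIV::nat set). {l \<in> lists A. length l = n}| \<le>o |A|"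
  proof (rule card_of_UNION_ordLeq_infinite[OF inf])
    show "|UNIV :: nat set| \<le>o |A|"
      using inf infinite_iff_card_of_nat by blast
  qed (use len in auto)
  ultimately show ?thesis by simp
qed

definition covers :: "real set set set" where
  "covers = {F. F \<subseteq> null_sets lebesgue \<and> \<Union>F = UNIV}"

lemma directed_exists:
  "\<exists>(D :: real set) le (N :: real \<Rightarrow> real set). directed_set D le \<and> \<not> is_cardinal_number D le
     \<and> card_eq_covN D \<and> (\<forall>a\<in>D. N a \<in> null_sets lebesgue) \<and> (\<forall>t. \<exists>a\<in>D. t \<in> N a)
     \<and> (\<forall>a\<in>D. \<forall>b\<in>D. le a b \<longrightarrow> N a \<subseteq> N b)"
proof -
  define S1 where "S1 = (\<lambda>x::real. {x}) ` UNIV"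
  have S1c: "S1 \<in> covers" by (auto simp: covers_def S1_def)
  obtain r where r: "r \<in> card_of ` covers" "\<forall>r'\<in>card_of ` covers. r \<le>o r'"
    using exists_minim_Well_order[of "card_of ` covers"] S1c card_of_Well_order by blast
  then obtain F0 where F0: "F0 \<in> covers" "r = |F0|" by blast
  have F0min: "|F0| \<le>o |G|" if "G \<in> covers" for G using r F0 that by auto
  have F0inf: "infinite F0"
  proof
    assume "finite F0"
    then have "\<Union>F0 \<in> null_sets lebesgue" using F0(1)
      by (intro null_sets.finite_Union) (auto simp: covers_def)
    then have "(UNIV :: real set) \<in> null_sets lebesgue" using F0(1) by (simp add: covers_def)
    moreover have "emeasure lebesgue (UNIV :: real set) \<noteq> 0"
    proof
      assume "emeasure lebesgue (UNIV :: real set) = 0"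
      moreover have "emeasure lebesgue {0..1::real} \<le> emeasure lebesgue (UNIV::real set)"
        by (rule emeasure_mono) auto
      ultimately have "emeasure lebesgue {0..1::real} \<le> 0" by simp
      then show False by simp
    qed
    ultimately show False by auto
  qed
  define F1 where "F1 = insert {0::real} (insert {1} F0)"
  have F1inf: "infinite F1" using F0inf by (simp add: F1_def)
  have "F1 \<approx> F0" unfolding F1_def
    using infinite_insert_eqpoll F0inf
    by (metis eqpoll_trans finite_insert)
  then have F1F0: "|F1| \<le>o |F0|" by (simp add: eqpoll_iff_card_of_ordIso ordIso_iff_ordLeq)
  define GG where "GG = (\<lambda>l. \<Union>(set l)) ` lists F1"
  have F1null: "F1 \<subseteq> null_sets lebesgue" using F0(1) by (auto simp: F1_def covers_def)
  have GGnull: "GG \<subseteq> null_sets lebesgue"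
  proof
    fix X assume "X \<in> GG"
    then obtain l where "l \<in> lists F1" "X = \<Union>(set l)" by (auto simp: GG_def)
    then show "X \<in> null_sets lebesgue" using F1null
      by (auto intro!: null_sets.finite_Union)
  qed
  have inGG: "X \<in> GG" if "X \<in> F1" for X
    using that by (auto simp: GG_def intro!: image_eqI[of _ _ "[X]"])
  have GGun: "X \<union> Y \<in> GG" if XY: "X \<in> GG" "Y \<in> GG" for X Y
  proof -
    obtain l1 where "l1 \<in> lists F1" "X = \<Union>(set l1)" using XY(1) by (auto simp: GG_def)
    moreover obtain l2 where "l2 \<in> lists F1" "Y = \<Union>(set l2)" using XY(2) by (auto simp: GG_def)
    ultimately show ?thesis by (auto simp: GG_def intro!: image_eqI[of _ _ "l1 @ l2"])
  qed
  have GGc: "GG \<in> covers"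
  proof -
    have "\<Union>F0 \<subseteq> \<Union>GG" using inGG by (auto simp: F1_def)
    then show ?thesis using F0(1) GGnull by (auto simp: covers_def)
  qed
  have GGle: "|GG| \<le>o |F0|"
  proof -
    have "|GG| \<le>o |lists F1|" unfolding GG_def by (rule card_of_image)
    also have "|lists F1| \<le>o |F1|" by (rule lists_card[OF F1inf])
    finally show ?thesis using F1F0 ordLeq_transitive by blast
  qed
  have "|F0| \<le>o |S1|" by (rule F0min[OF S1c])
  moreover have "|S1| \<le>o |UNIV :: real set|" unfolding S1_def by (rule card_of_image)
  ultimately have "|GG| \<le>o |UNIV :: real set|" using GGle ordLeq_transitive by blast
  then obtain f :: "real set \<Rightarrow> real" where f: "inj_on f GG"
    using card_of_ordLeq[of GG "UNIV :: real set"] by blast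
  define D where "D = f ` GG"
  define N where "N = the_inv_into GG f"
  define le where "le = (\<lambda>a b. N a \<subseteq> N b)"
  have NfX: "N (f X) = X" if "X \<in> GG" for X using the_inv_into_f_f[OF f that] by (simp add: N_def)
  have ND: "N a \<in> GG" if "a \<in> D" for a using that NfX by (auto simp: D_def)
  have dir: "directed_set D le"
    unfolding directed_set_def
  proof (intro conjI ballI)
    show "D \<noteq> {}" using inGG[of "{0}"] by (auto simp: D_def F1_def)
    show "\<exists>c\<in>D. le a c \<and> le b c" if "a \<in> D" "b \<in> D" for a b
    proof (intro bexI[of _ "f (N a \<union> N b)"])
      have "N a \<union> N b \<in> GG" using GGun ND that by blast
      then show "le a (f (N a \<union> N b)) \<and> le b (f (N a \<union> N b))" using NfX by (simp add: le_def)
      show "f (N a \<union> N b) \<in> D" using \<open>N a \<union> N b \<in> GG\<close> by (simp add: D_def)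
    qed
  qed (auto simp: le_def)
  have notcard: "\<not> is_cardinal_number D le"
  proof
    assume "is_cardinal_number D le"
    then have "total_on D (dir_rel D le)"
      unfolding is_cardinal_number_def card_order_on_def well_order_on_def linear_order_on_def by blast
    moreover have g0: "{0} \<in> GG" and g1: "{1} \<in> GG" using inGG by (auto simp: F1_def)
    moreover have "f {0} \<noteq> f {1}" using f g0 g1 by (metis inj_on_contraD zero_neq_one singleton_inject)
    ultimately have "(f {0}, f {1}) \<in> dir_rel D le \<or> (f {1}, f {0}) \<in> dir_rel D le"
      unfolding total_on_def D_def by blast
    then show False using NfX[OF g0] NfX[OF g1] by (auto simp: dir_rel_def le_def)
  qed
  have iso: "|D| =o |GG|"
  proof -
    have "bij_betw f GG D" using f by (simp add: D_def bij_betw_def)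
    then have "|GG| =o |D|" using card_of_ordIso by blast
    then show ?thesis using ordIso_symmetric by blast
  qed
  have cov: "card_eq_covN D"
    unfolding card_eq_covN_def
  proof (intro conjI allI impI)
    show "\<exists>F :: real set set. F \<subseteq> null_sets lebesgue \<and> \<Union>F = UNIV \<and> |D| =o |F|"
      using GGc iso by (auto simp: covers_def)
    fix G :: "real set set" assume "G \<subseteq> null_sets lebesgue \<and> \<Union>G = UNIV"
    then have "G \<in> covers" by (simp add: covers_def)
    then have "|GG| \<le>o |G|" using GGle F0min ordLeq_transitive by blast
    then show "|D| \<le>o |G|" using iso ordIso_ordLeq_trans by blast
  qed
  have nulls: "\<forall>a\<in>D. N a \<in> null_sets lebesgue" using ND GGnull by blast
  have covt: "\<forall>t. \<exists>a\<in>D. t \<in> N a"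
  proof
    fix t :: real
    have "t \<in> \<Union>GG" using GGc by (simp add: covers_def)
    then obtain X where "X \<in> GG" "t \<in> X" by blast
    then show "\<exists>a\<in>D. t \<in> N a" using NfX by (auto simp: D_def)
  qed
  show ?thesis
    by (intro exI[of _ D] exI[of _ le] exI[of _ N]) (use dir notcard cov nulls covt in \<open>auto simp: le_def\<close>)
qed


lemma poly_eval_cong: "(\<And>i. i < n \<Longrightarrow> v i = w i) \<Longrightarrow> poly_eval n M c v = poly_eval n M c w"
  unfolding poly_eval_def by (intro sum.cong refl arg_cong2[where f="(*)"] prod.cong) auto

lemma poly_eval_zero:
  assumes "nonzero_poly_nc n M c"
  shows "poly_eval n M c (\<lambda>_. 0) = 0"
  unfolding poly_eval_def
proof (rule sum.neutral, rule ballI)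
  fix m assume m: "m \<in> M"
  have "m \<noteq> (\<lambda>_. 0)" "\<forall>i\<ge>n. m i = 0" using assms m by (auto simp: nonzero_poly_nc_def)
  then obtain i where i: "m i \<noteq> 0" "i < n" by (metis not_le)
  then have "(\<Prod>i<n. (0::real) ^ m i) = 0" by (intro prod_zero) auto
  then show "c m * (\<Prod>i<n. (0::real) ^ m i) = 0" by simp
qed

lemma lebesgue_01_pos: "compact {0..1::real} \<and> measure lebesgue {0..1::real} > 0"
  by (simp add: measure_def)

theorem mainTheorem6:
  shows "\<exists>(D :: real set) (le :: real \<Rightarrow> real \<Rightarrow> bool).
           directed_set D le \<and> \<not> is_cardinal_number D le \<and> card_eq_covN D
           \<and> strongly_algebrable_nets D (AN D le) (Pow (UNIV :: real set))"
proof -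
  obtain D :: "real set" and le :: "real \<Rightarrow> real \<Rightarrow> bool" and N :: "real \<Rightarrow> real set" where DN: "directed_set D le" "\<not> is_cardinal_number D le" "card_eq_covN D"
    "\<forall>a\<in>D. N a \<in> null_sets lebesgue" "\<forall>t. \<exists>a\<in>D. t \<in> N a" "\<forall>a\<in>D. \<forall>b\<in>D. le a b \<longrightarrow> N a \<subseteq> N b"
    using directed_exists by blast
  obtain \<eta> :: "real \<Rightarrow> ytype" where eta: "\<forall>y K. compact K \<and> measure lebesgue K > 0 \<longrightarrow> (\<exists>t\<in>K. \<eta> t = y)"
    using bernstein by blast
  have fiber: "\<exists>t. \<eta> t = y" for y using eta lebesgue_01_pos by blast
  define vS where "vS S t = real (psi S (\<eta> t))" for S t
  define xnet where "xnet S = (\<lambda>A t. if A \<in> D \<and> t \<in> N A then vS S t else 0)" for S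
  define X where "X = xnet ` (UNIV :: real set set)"
  have Xnets: "X \<subseteq> nets D" by (auto simp: X_def nets_def xnet_def)
  have xinj: "inj xnet"
  proof (rule injI)
    fix S S' assume eq: "xnet S = xnet S'"
    show "S = S'"
    proof (rule ccontr)
      assume ne: "S \<noteq> S'"
      define SS where "SS = (\<lambda>i::nat. if i = 0 then S else S')"
      have "inj_on SS {..<2}" using ne by (auto simp: inj_on_def SS_def)
      then obtain y where y: "\<forall>i<2. psi (SS i) y = (if i = 0 then 1 else 0)"
        using psi_indep[of SS 2 "\<lambda>i. if i = 0 then 1 else 0"] by blast
      obtain t where t: "\<eta> t = y" using fiber by blast
      obtain a where a: "a \<in> D" "t \<in> N a" using DN(5) by blast
      have "xnet S a t = 1" "xnet S' a t = 0"
        using y[rule_format, of 0] y[rule_format, of 1] a t by (auto simp: xnet_def vS_def SS_def)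
      then show False using eq by simp
    qed
  qed
  have Xcard: "|X| =o |Pow (UNIV :: real set)|"
  proof -
    have "bij_betw xnet (UNIV :: real set set) X" using xinj by (simp add: X_def bij_betw_def)
    then have "|UNIV :: real set set| =o |X|" using card_of_ordIso by blast
    then show ?thesis using ordIso_symmetric by simp
  qed
  have poly: "net_poly_eval n M c x \<noteq> (\<lambda>_ _. 0) \<and> net_poly_eval n M c x \<in> AN D le"
    if P: "nonzero_poly_nc n M c" and xi: "inj_on x {..<n}" and xX: "x ` {..<n} \<subseteq> X" for n M c x
  proof -
    define Sx where "Sx i = (SOME S. x i = xnet S)" for i
    have xS: "x i = xnet (Sx i)" if "i < n" for i
    proof -
      have "\<exists>S. x i = xnet S" using xX that by (auto simp: X_def)
      then show ?thesis unfolding Sx_def by (rule someI_ex)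
    qed
    have Sinj: "inj_on Sx {..<n}"
      using xi xS by (auto simp: inj_on_def)
    define G where "G t = poly_eval n M c (\<lambda>i. vS (Sx i) t)" for t
    have npe: "net_poly_eval n M c x A t = (if A \<in> D \<and> t \<in> N A then G t else 0)" for A t
    proof (cases "A \<in> D \<and> t \<in> N A")
      case True
      then show ?thesis unfolding net_poly_eval_def G_def
        by (auto intro!: poly_eval_cong simp: xS xnet_def)
    next
      case False
      then have "net_poly_eval n M c x A t = poly_eval n M c (\<lambda>_. 0)"
        unfolding net_poly_eval_def by (intro poly_eval_cong) (auto simp: xS xnet_def)
      then show ?thesis using False poly_eval_zero[OF P] by auto
    qed
    obtain k where k: "poly_eval n M c (\<lambda>i. real (k i)) \<noteq> 0" using poly_nonvanish[OF P] by blast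
    obtain y0 where y0: "\<forall>i<n. psi (Sx i) y0 = k i" using psi_indep[OF Sinj] by blast
    have G0: "G t \<noteq> 0" if "\<eta> t = y0" for t
    proof -
      have "G t = poly_eval n M c (\<lambda>i. real (k i))"
        unfolding G_def by (rule poly_eval_cong) (use y0 that in \<open>auto simp: vS_def\<close>)
      then show ?thesis using k by simp
    qed
    have G1: "G t = 0" if "\<eta> t = ([], [])" for t
    proof -
      have "G t = poly_eval n M c (\<lambda>_. 0)"
        unfolding G_def by (rule poly_eval_cong) (use that in \<open>auto simp: vS_def psi_star\<close>)
      then show ?thesis using poly_eval_zero[OF P] by simp
    qed
    have Gnm: "G \<notin> borel_measurable lebesgue"
      by (rule nonmeas[OF eta G0 G1])
    obtain t0 where t0: "\<eta> t0 = y0" using fiber by blast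
    obtain a0 where a0: "a0 \<in> D" "t0 \<in> N a0" using DN(5) by blast
    have nz: "net_poly_eval n M c x \<noteq> (\<lambda>_ _. 0)"
    proof
      assume "net_poly_eval n M c x = (\<lambda>_ _. 0)"
      then have "net_poly_eval n M c x a0 t0 = 0" by simp
      then show False using npe[of a0 t0] a0 G0[OF t0] by simp
    qed
    have innets: "net_poly_eval n M c x \<in> nets D"
      unfolding nets_def using npe by (auto simp: fun_eq_iff)
    have meas: "\<forall>A\<in>D. net_poly_eval n M c x A \<in> borel_measurable lebesgue"
    proof
      fix A assume A: "A \<in> D"
      have "AE t in lebesgue. (0::real) = net_poly_eval n M c x A t"
        by (rule AE_I'[OF DN(4)[rule_format, OF A]]) (auto simp: npe)
      then show "net_poly_eval n M c x A \<in> borel_measurable lebesgue"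
        by (rule borel_measurable_AE[OF borel_measurable_const])
    qed
    have conv: "AE t in lebesgue. net_tendsto D le (\<lambda>A. net_poly_eval n M c x A t) (G t)"
    proof (rule AE_I2)
      fix t
      obtain a where a: "a \<in> D" "t \<in> N a" using DN(5) by blast
      show "net_tendsto D le (\<lambda>A. net_poly_eval n M c x A t) (G t)"
        unfolding net_tendsto_def
      proof (intro allI impI)
        fix U assume U: "open U \<and> G t \<in> U"
        have "\<forall>A\<in>D. le a A \<longrightarrow> net_poly_eval n M c x A t \<in> U"
          using DN(6) a U by (auto simp: npe)
        then show "\<exists>A0\<in>D. \<forall>A\<in>D. le A0 A \<longrightarrow> net_poly_eval n M c x A t \<in> U" using a by blast
      qed
    qed
    have "net_poly_eval n M c x \<in> AN D le"
      unfolding AN_def using innets meas Gnm conv by blast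
    then show ?thesis using nz by blast
  qed
  have "strongly_algebrable_nets D (AN D le) (Pow (UNIV :: real set))"
    unfolding strongly_algebrable_nets_def
    using Xnets Xcard poly by blast
  then show ?thesis using DN(1-3) by blast
qed


end
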